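(* Let $p\in(0,1)$, let $d_p$ be the $(1-p)$-quantile of $K_{\hat\vartheta}=\sup_{x\in\mathbb{R}}|F_{\hat\vartheta}(x)-F_\vartheta(x)|$, let $B_4=\{(x,y)\in\mathbb{R}^2:|F_{\hat\vartheta}(x)-y|\le d_p\}$, and define $$C_4'=\{\tilde\vartheta\in\Theta:\ \mathrm{graph}\,F_{\tilde\vartheta}\subseteq B_4\},\quad C_4''=\{(\mu,\sigma)\in C_4':\mu\le\hat\mu\},\quad B_4'=\bigcup_{\tilde\vartheta\in C_4'}\mathrm{graph}\,F_{\tilde\vartheta},\quad B_4''=\bigcup_{\tilde\vartheta\in C_4''}\mathrm{graph}\,F_{\tilde\vartheta}.$$ Then for every $\vartheta\in\Theta$, $$P_\vartheta(\vartheta\in C_4')=P_\vartheta(\vartheta\in C_4'')=P_\vartheta(\mathrm{graph}\,F_\vartheta\subseteq B_4')=P_\vartheta(\mathrm{graph}\,F_\vartheta\subseteq B_4'')=1-p.$$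
   Context: Let $1<m\le n$ be integers and $(R_1,\dots,R_m)\in\mathbb{N}_0^m$ with $\sum_{j=1}^mR_j=n-m$; set $\gamma_j=\sum_{i=j}^m(R_i+1)$. A sample of progressively type-II censored order statistics $X=(X_{1:m:n},\dots,X_{m:m:n})$ from an absolutely continuous cdf $F$ with density $f$ has joint density $\prod_{j=1}^m\gamma_jf(x_j)[1-F(x_j)]^{R_j}$ on $x_1\le\dots\le x_m$. Here $F=F_\vartheta$ belongs to the exponential location-scale family: for $\vartheta=(\mu,\sigma)\in\Theta=\mathbb{R}\times(0,\infty)$, $F_\vartheta(x)=1-\exp\{-(x-\mu)/\sigma\}$ for $x>\mu$ and $F_\vartheta(x)=0$ for $x\le\mu$; $\vartheta$ is unknown and $P_\vartheta$ denotes the underlying probability. The MLEs are $\hat\mu=X_{1:m:n}$ and $\hat\sigma=\frac1m\sum_{j=2}^m\gamma_j(X_{j:m:n}-X_{j-1:m:n})$, and $\hat\vartheta=(\hat\mu,\hat\sigma)$. The distribution of $K_{\hat\vartheta}$ is continuous and does not depend on $\vartheta$. $\mathrm{graph}\,F=\{(t,F(t)):t\in\mathbb{R}\}$. *)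

theory Defs
  imports "HOL-Probability.Probability"
begin

definition expF :: "real \<times> real \<Rightarrow> real \<Rightarrow> real" where
  "expF \<theta> t = (if t > fst \<theta> then 1 - exp (- (t - fst \<theta>) / snd \<theta>) else 0)"

definition expf :: "real \<times> real \<Rightarrow> real \<Rightarrow> real" where
  "expf \<theta> t = (if t > fst \<theta> then exp (- (t - fst \<theta>) / snd \<theta>) / snd \<theta> else 0)"

definition Theta :: "(real \<times> real) set" where
  "Theta = {\<theta>. snd \<theta> > 0}"

definition graphF :: "(real \<Rightarrow> real) \<Rightarrow> (real \<times> real) set" where
  "graphF F = {(t, F t) | t. True}"

definition gam :: "nat \<Rightarrow> (nat \<Rightarrow> nat) \<Rightarrow> nat \<Rightarrow> real" where
  "gam m R j = (\<Sum>i=j..m. real (R i) + 1)"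

text \<open>Samples are vectors x indexed by 1..m, x j = X_{j:m:n}.
  Joint density of progressively type-II censored order statistics.\<close>
definition pc_density :: "nat \<Rightarrow> (nat \<Rightarrow> nat) \<Rightarrow> real \<times> real \<Rightarrow> (nat \<Rightarrow> real) \<Rightarrow> real" where
  "pc_density m R \<theta> x =
     (if (\<forall>j\<in>{1..<m}. x j \<le> x (Suc j))
      then (\<Prod>j=1..m. gam m R j * expf \<theta> (x j) * (1 - expF \<theta> (x j)) ^ R j)
      else 0)"

definition P_pc :: "nat \<Rightarrow> (nat \<Rightarrow> nat) \<Rightarrow> real \<times> real \<Rightarrow> (nat \<Rightarrow> real) measure" where
  "P_pc m R \<theta> = density (PiM {1..m} (\<lambda>_. lborel)) (\<lambda>x. ennreal (pc_density m R \<theta> x))"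

definition mu_hat :: "(nat \<Rightarrow> real) \<Rightarrow> real" where
  "mu_hat x = x 1"

definition sigma_hat :: "nat \<Rightarrow> (nat \<Rightarrow> nat) \<Rightarrow> (nat \<Rightarrow> real) \<Rightarrow> real" where
  "sigma_hat m R x = (1 / real m) * (\<Sum>j=2..m. gam m R j * (x j - x (j - 1)))"

definition theta_hat :: "nat \<Rightarrow> (nat \<Rightarrow> nat) \<Rightarrow> (nat \<Rightarrow> real) \<Rightarrow> real \<times> real" where
  "theta_hat m R x = (mu_hat x, sigma_hat m R x)"

definition Kstat :: "nat \<Rightarrow> (nat \<Rightarrow> nat) \<Rightarrow> real \<times> real \<Rightarrow> (nat \<Rightarrow> real) \<Rightarrow> real" where
  "Kstat m R \<theta> x = (SUP t. \<bar>expF (theta_hat m R x) t - expF \<theta> t\<bar>)"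

definition d_quant :: "nat \<Rightarrow> (nat \<Rightarrow> nat) \<Rightarrow> real \<times> real \<Rightarrow> real \<Rightarrow> real" where
  "d_quant m R \<theta> p = Inf {t. measure (P_pc m R \<theta>) {x \<in> space (P_pc m R \<theta>). Kstat m R \<theta> x \<le> t} \<ge> 1 - p}"

definition B4 :: "nat \<Rightarrow> (nat \<Rightarrow> nat) \<Rightarrow> real \<Rightarrow> (nat \<Rightarrow> real) \<Rightarrow> (real \<times> real) set" where
  "B4 m R d x = {(s, y). \<bar>expF (theta_hat m R x) s - y\<bar> \<le> d}"

definition C4' :: "nat \<Rightarrow> (nat \<Rightarrow> nat) \<Rightarrow> real \<Rightarrow> (nat \<Rightarrow> real) \<Rightarrow> (real \<times> real) set" where
  "C4' m R d x = {\<theta>\<in>Theta. graphF (expF \<theta>) \<subseteq> B4 m R d x}"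

definition C4'' :: "nat \<Rightarrow> (nat \<Rightarrow> nat) \<Rightarrow> real \<Rightarrow> (nat \<Rightarrow> real) \<Rightarrow> (real \<times> real) set" where
  "C4'' m R d x = {\<theta>\<in>C4' m R d x. fst \<theta> \<le> mu_hat x}"

definition B4' :: "nat \<Rightarrow> (nat \<Rightarrow> nat) \<Rightarrow> real \<Rightarrow> (nat \<Rightarrow> real) \<Rightarrow> (real \<times> real) set" where
  "B4' m R d x = (\<Union>\<theta>\<in>C4' m R d x. graphF (expF \<theta>))"

definition B4'' :: "nat \<Rightarrow> (nat \<Rightarrow> nat) \<Rightarrow> real \<Rightarrow> (nat \<Rightarrow> real) \<Rightarrow> (real \<times> real) set" where
  "B4'' m R d x = (\<Union>\<theta>\<in>C4'' m R d x. graphF (expF \<theta>))"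

end

theory Submission
  imports Defs "HOL-Real_Asymp.Real_Asymp"
begin


lemma expF_alt: "expF \<theta> s = 1 - exp (- (max s (fst \<theta>) - fst \<theta>) / snd \<theta>)"
  by (simp add: expF_def max_def)

lemma expF_cont: "continuous_on UNIV (expF \<theta>)"
  unfolding expF_alt[abs_def] divide_inverse by (intro continuous_intros)

lemma expF_range: "snd \<theta> > 0 \<Longrightarrow> 0 \<le> expF \<theta> s \<and> expF \<theta> s \<le> 1"
  by (auto simp: expF_def divide_nonpos_pos)

definition Dd :: "real \<Rightarrow> real \<Rightarrow> real \<Rightarrow> real \<Rightarrow> real \<Rightarrow> real" where
  "Dd \<mu> \<sigma> \<sigma>' u s = expF (u,\<sigma>') s - expF (\<mu>,\<sigma>) s"

lemma Dd_bnd: "\<sigma> > 0 \<Longrightarrow> \<sigma>' > 0 \<Longrightarrow> \<bar>Dd \<mu> \<sigma> \<sigma>' u s\<bar> \<le> 1"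
  using expF_range[of "(u,\<sigma>')" s] expF_range[of "(\<mu>,\<sigma>)" s] by (auto simp: Dd_def)

lemma gm_strict:
  assumes sp: "\<sigma> > 0" "\<sigma>' > 0" and uv: "\<mu> < u" "u < v"
  shows "(SUP s. - Dd \<mu> \<sigma> \<sigma>' u s) < (SUP s. - Dd \<mu> \<sigma> \<sigma>' v s)"
proof -
  let ?g = "\<lambda>u. SUP s. - Dd \<mu> \<sigma> \<sigma>' u s"
  have bdd: "bdd_above (range (\<lambda>s. - Dd \<mu> \<sigma> \<sigma>' w s))" for w
    using Dd_bnd[OF sp] by (intro bdd_aboveI[of _ 1]) (auto simp: abs_le_iff)
  define c where "c = 1 - exp(-(u-\<mu>)/\<sigma>)"
  define \<delta> where "\<delta> = v - u"
  define L where "L = ln (2/c)"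
  define \<eta> where "\<eta> = exp(-(u-\<mu>)/\<sigma>) * exp(-\<sigma>' * L/\<sigma>) * (1 - exp(-\<delta>/\<sigma>))"
  have c: "0 < c" "c \<le> 1" using uv sp by (auto simp: c_def divide_neg_pos)
  have L: "L \<ge> 0" using c by (auto simp: L_def)
  have dpos: "\<delta> > 0" using uv by (simp add: \<delta>_def)
  have cg: "c \<le> ?g u"
  proof -
    have "- Dd \<mu> \<sigma> \<sigma>' u u = c" using uv by (simp add: Dd_def expF_def c_def)
    then show ?thesis using cSUP_upper[OF UNIV_I bdd[of u], of u] by (simp only:)
  qed
  have eta: "\<eta> > 0" using dpos sp by (simp add: \<eta>_def)
  have e1: "exp(-\<sigma>' * L/\<sigma>) \<le> 1" using L sp by (simp add: divide_nonneg_pos)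
  have key: "- Dd \<mu> \<sigma> \<sigma>' v (s+\<delta>) \<ge> - Dd \<mu> \<sigma> \<sigma>' u s + \<eta>"
    if s: "- Dd \<mu> \<sigma> \<sigma>' u s > c/2" for s
  proof -
    have diff: "exp(-(s-\<mu>)/\<sigma>) - exp(-(s+\<delta>-\<mu>)/\<sigma>) = exp(-(s-\<mu>)/\<sigma>) * (1 - exp(-\<delta>/\<sigma>))"
      by (simp add: algebra_simps flip: exp_add) (simp add: diff_divide_distrib add_divide_distrib)
    have pos: "1 - exp(-\<delta>/\<sigma>) > 0" using dpos sp by simp
    consider "s \<le> \<mu>" | "\<mu> < s" "s \<le> u" | "u < s" by linarith
    then show ?thesis
    proof cases
      case 1
      then have "- Dd \<mu> \<sigma> \<sigma>' u s = 0" using uv by (simp add: Dd_def expF_def)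
      with s c show ?thesis by simp
    next
      case 2
      then have A: "- Dd \<mu> \<sigma> \<sigma>' u s = 1 - exp(-(s-\<mu>)/\<sigma>)"
        and B: "- Dd \<mu> \<sigma> \<sigma>' v (s+\<delta>) = 1 - exp(-(s+\<delta>-\<mu>)/\<sigma>)"
        using uv by (auto simp: Dd_def expF_def \<delta>_def)
      have "exp(-(u-\<mu>)/\<sigma>) \<le> exp(-(s-\<mu>)/\<sigma>)" using 2 sp by (simp add: divide_right_mono)
      then have "\<eta> \<le> exp(-(s-\<mu>)/\<sigma>) * (1 - exp(-\<delta>/\<sigma>))"
        unfolding \<eta>_def using e1 pos
        by (metis mult_le_cancel_right_pos mult_left_le mult_right_mono exp_ge_zero dual_order.trans less_eq_real_def)
      with A B diff show ?thesis by linarith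
    next
      case 3
      then have A: "- Dd \<mu> \<sigma> \<sigma>' u s = exp(-(s-u)/\<sigma>') - exp(-(s-\<mu>)/\<sigma>)"
        and B: "- Dd \<mu> \<sigma> \<sigma>' v (s+\<delta>) = exp(-(s-u)/\<sigma>') - exp(-(s+\<delta>-\<mu>)/\<sigma>)"
        using uv by (auto simp: Dd_def expF_def \<delta>_def)
      have "exp(-(s-u)/\<sigma>') > c/2" using s A by (smt (verit) exp_gt_zero)
      then have "ln (c/2) < ln (exp (-(s-u)/\<sigma>'))" using c by (subst ln_less_cancel_iff) auto
      then have "ln (c/2) < -(s-u)/\<sigma>'" by simp
      then have "s - u < \<sigma>' * L" using sp c unfolding L_def
        by (simp add: ln_div field_simps)
      then have "-\<sigma>' * L/\<sigma> < -(s-u)/\<sigma>" using sp by (simp add: field_simps)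
      then have "exp(-\<sigma>' * L/\<sigma>) \<le> exp(-(s-u)/\<sigma>)" by simp
      then have "exp(-(u-\<mu>)/\<sigma>) * exp(-\<sigma>' * L/\<sigma>) \<le> exp(-(u-\<mu>)/\<sigma>) * exp(-(s-u)/\<sigma>)"
        by simp
      also have "\<dots> = exp(-(s-\<mu>)/\<sigma>)" by (simp flip: exp_add add_divide_distrib)
      finally have "\<eta> \<le> exp(-(s-\<mu>)/\<sigma>) * (1 - exp(-\<delta>/\<sigma>))"
        unfolding \<eta>_def using pos by (simp add: mult_right_mono)
      with A B diff show ?thesis by linarith
    qed
  qed
  have "?g u - min (c/2) \<eta> < ?g u" using eta c by simp
  then obtain s where s: "?g u - min (c/2) \<eta> < - Dd \<mu> \<sigma> \<sigma>' u s"
    using less_cSUP_iff[OF _ bdd[of u]] by auto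
  then have "- Dd \<mu> \<sigma> \<sigma>' u s > c/2" using cg by linarith
  from key[OF this] have "- Dd \<mu> \<sigma> \<sigma>' v (s+\<delta>) > ?g u" using s by linarith
  also have "- Dd \<mu> \<sigma> \<sigma>' v (s+\<delta>) \<le> ?g v" by (rule cSUP_upper[OF UNIV_I bdd])
  finally show ?thesis by simp
qed

lemma gp_strict:
  assumes sp: "\<sigma> > 0" "\<sigma>' > 0" and uv: "\<mu> < u" "u < v"
    and g: "(SUP s. Dd \<mu> \<sigma> \<sigma>' v s) > 0"
  shows "(SUP s. Dd \<mu> \<sigma> \<sigma>' v s) < (SUP s. Dd \<mu> \<sigma> \<sigma>' u s)"
proof -
  let ?g = "\<lambda>u. SUP s. Dd \<mu> \<sigma> \<sigma>' u s"
  have bdd: "bdd_above (range (\<lambda>s. Dd \<mu> \<sigma> \<sigma>' w s))" for w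
    using Dd_bnd[OF sp] by (intro bdd_aboveI[of _ 1]) (auto simp: abs_le_iff)
  define g where "g = ?g v"
  define \<delta> where "\<delta> = v - u"
  define \<eta> where "\<eta> = (g/2) * (exp(\<delta>/\<sigma>) - 1)"
  have dpos: "\<delta> > 0" using uv by (simp add: \<delta>_def)
  have gp: "g > 0" using g by (simp add: g_def)
  have eta: "\<eta> > 0" using dpos sp gp by (simp add: \<eta>_def)
  have "g - min (g/2) \<eta> < g" using eta gp by simp
  then obtain s' where s': "g - min (g/2) \<eta> < Dd \<mu> \<sigma> \<sigma>' v s'"
    using less_cSUP_iff[OF _ bdd[of v]] unfolding g_def by auto
  then have s'2: "Dd \<mu> \<sigma> \<sigma>' v s' > g/2" by linarith
  have s'v: "s' > v"
  proof (rule ccontr)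
    assume "\<not> s' > v"
    then have "Dd \<mu> \<sigma> \<sigma>' v s' \<le> 0" using expF_range[of "(\<mu>,\<sigma>)" s'] sp
      by (simp add: Dd_def expF_def)
    with s'2 gp show False by linarith
  qed
  have A: "Dd \<mu> \<sigma> \<sigma>' v s' = exp(-(s'-\<mu>)/\<sigma>) - exp(-(s'-v)/\<sigma>')"
    using s'v uv by (simp add: Dd_def expF_def)
  have B: "Dd \<mu> \<sigma> \<sigma>' u (s'-\<delta>) = exp(-(s'-\<delta>-\<mu>)/\<sigma>) - exp(-(s'-v)/\<sigma>')"
    using s'v uv by (simp add: Dd_def expF_def \<delta>_def)
  have C: "exp(-(s'-\<delta>-\<mu>)/\<sigma>) = exp(-(s'-\<mu>)/\<sigma>) * exp(\<delta>/\<sigma>)"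
    by (simp flip: exp_add add_divide_distrib)
  have big: "exp(-(s'-\<mu>)/\<sigma>) > g/2" using A s'2 by (smt (verit) exp_gt_zero)
  have "(g/2) * (exp(\<delta>/\<sigma>) - 1) \<le> exp(-(s'-\<mu>)/\<sigma>) * (exp(\<delta>/\<sigma>) - 1)"
    using big dpos sp by (intro mult_right_mono) auto
  then have "Dd \<mu> \<sigma> \<sigma>' u (s'-\<delta>) \<ge> Dd \<mu> \<sigma> \<sigma>' v s' + \<eta>"
    unfolding \<eta>_def using A B C by (simp add: algebra_simps)
  then have "Dd \<mu> \<sigma> \<sigma>' u (s'-\<delta>) > g" using s' by linarith
  also have "Dd \<mu> \<sigma> \<sigma>' u (s'-\<delta>) \<le> ?g u" by (rule cSUP_upper[OF UNIV_I bdd])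
  finally show ?thesis by (simp add: g_def)
qed

lemma Kf_max:
  assumes sp: "\<sigma> > 0" "\<sigma>' > 0"
  shows "(SUP s. \<bar>Dd \<mu> \<sigma> \<sigma>' u s\<bar>) = max (SUP s. Dd \<mu> \<sigma> \<sigma>' u s) (SUP s. - Dd \<mu> \<sigma> \<sigma>' u s)"
proof -
  have b1: "bdd_above (range (\<lambda>s. Dd \<mu> \<sigma> \<sigma>' u s))"
    and b2: "bdd_above (range (\<lambda>s. - Dd \<mu> \<sigma> \<sigma>' u s))"
    and b3: "bdd_above (range (\<lambda>s. \<bar>Dd \<mu> \<sigma> \<sigma>' u s\<bar>))"
    using Dd_bnd[OF sp] by (intro bdd_aboveI[of _ 1]; auto simp: abs_le_iff)+
  show ?thesis
  proof (rule antisym)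
    show "(SUP s. \<bar>Dd \<mu> \<sigma> \<sigma>' u s\<bar>) \<le> max (SUP s. Dd \<mu> \<sigma> \<sigma>' u s) (SUP s. - Dd \<mu> \<sigma> \<sigma>' u s)"
    proof (rule cSUP_least)
      fix s
      have "Dd \<mu> \<sigma> \<sigma>' u s \<le> (SUP s. Dd \<mu> \<sigma> \<sigma>' u s)" by (rule cSUP_upper[OF UNIV_I b1])
      moreover have "- Dd \<mu> \<sigma> \<sigma>' u s \<le> (SUP s. - Dd \<mu> \<sigma> \<sigma>' u s)" by (rule cSUP_upper[OF UNIV_I b2])
      ultimately show "\<bar>Dd \<mu> \<sigma> \<sigma>' u s\<bar> \<le> max (SUP s. Dd \<mu> \<sigma> \<sigma>' u s) (SUP s. - Dd \<mu> \<sigma> \<sigma>' u s)"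
        by linarith
    qed simp
    have "(SUP s. Dd \<mu> \<sigma> \<sigma>' u s) \<le> (SUP s. \<bar>Dd \<mu> \<sigma> \<sigma>' u s\<bar>)"
      by (rule cSUP_mono[OF _ b3]) (auto intro: abs_ge_self)
    moreover have "(SUP s. - Dd \<mu> \<sigma> \<sigma>' u s) \<le> (SUP s. \<bar>Dd \<mu> \<sigma> \<sigma>' u s\<bar>)"
      by (rule cSUP_mono[OF _ b3]) (auto intro: abs_ge_minus_self)
    ultimately show "max (SUP s. Dd \<mu> \<sigma> \<sigma>' u s) (SUP s. - Dd \<mu> \<sigma> \<sigma>' u s) \<le> (SUP s. \<bar>Dd \<mu> \<sigma> \<sigma>' u s\<bar>)"
      by simp
  qed
qed

lemma finite_subsingleton: "(\<And>x y. x \<in> A \<Longrightarrow> y \<in> A \<Longrightarrow> x = y) \<Longrightarrow> finite A"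
  by (metis finite.simps is_singletonI' is_singleton_the_elem)

lemma level_finite:
  assumes sp: "\<sigma> > 0" "\<sigma>' > 0"
  shows "finite {u. \<mu> < u \<and> (SUP s. \<bar>Dd \<mu> \<sigma> \<sigma>' u s\<bar>) = t}"
proof -
  let ?gp = "\<lambda>u. SUP s. Dd \<mu> \<sigma> \<sigma>' u s" and ?gm = "\<lambda>u. SUP s. - Dd \<mu> \<sigma> \<sigma>' u s"
  have gmpos: "?gm u > 0" if "\<mu> < u" for u
  proof -
    have bdd: "bdd_above (range (\<lambda>s. - Dd \<mu> \<sigma> \<sigma>' u s))"
      using Dd_bnd[OF sp] by (intro bdd_aboveI[of _ 1]) (auto simp: abs_le_iff)
    have "- Dd \<mu> \<sigma> \<sigma>' u u = 1 - exp(-(u-\<mu>)/\<sigma>)" using that by (simp add: Dd_def expF_def)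
    moreover have "1 - exp(-(u-\<mu>)/\<sigma>) > 0" using that sp by (simp add: divide_neg_pos)
    ultimately show ?thesis using cSUP_upper[OF UNIV_I bdd, of u] by linarith
  qed
  let ?A = "{u. \<mu> < u \<and> ?gm u = t}" and ?B = "{u. \<mu> < u \<and> ?gp u = t \<and> ?gp u > 0}"
  have "finite ?A"
  proof (rule finite_subsingleton)
    fix x y assume "x \<in> ?A" "y \<in> ?A"
    then show "x = y" using gm_strict[OF sp, of \<mu>] by (cases x y rule: linorder_cases) force+
  qed
  moreover have "finite ?B"
  proof (rule finite_subsingleton)
    fix x y assume "x \<in> ?B" "y \<in> ?B"
    then show "x = y" using gp_strict[OF sp, of \<mu>] by (cases x y rule: linorder_cases) force+
  qed
  moreover have "{u. \<mu> < u \<and> (SUP s. \<bar>Dd \<mu> \<sigma> \<sigma>' u s\<bar>) = t} \<subseteq> ?A \<union> ?B"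
  proof
    fix u assume u: "u \<in> {u. \<mu> < u \<and> (SUP s. \<bar>Dd \<mu> \<sigma> \<sigma>' u s\<bar>) = t}"
    then have "max (?gp u) (?gm u) = t" "\<mu> < u" using Kf_max[OF sp] by auto
    with gmpos[of u] show "u \<in> ?A \<union> ?B" by (auto simp: max_def split: if_splits)
  qed
  ultimately show ?thesis by (meson finite_Un finite_subset)
qed



abbreviation LB :: "'i set \<Rightarrow> ('i \<Rightarrow> real) measure" where
  "LB I \<equiv> PiM I (\<lambda>_. lborel)"

lemma psf_lborel: "product_sigma_finite (\<lambda>_::'i. lborel::real measure)"
  by (simp add: product_sigma_finite_def lborel.sigma_finite_measure_axioms)

lemma plus_pre_sets: "A \<in> sets borel \<Longrightarrow> (+) (c::real) -` A \<in> sets borel"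
  using measurable_sets[of "(+) c" borel borel A] by simp

lemma PiM_translate:
  fixes I :: "'i set" and c :: real assumes I: "finite I"
  shows "distr (LB I) (LB I) (\<lambda>x. \<lambda>i\<in>I. c + x i) = LB I"
proof (rule product_sigma_finite.PiM_eqI[OF psf_lborel I])
  show "sets (distr (LB I) (LB I) (\<lambda>x. \<lambda>i\<in>I. c + x i)) = sets (LB I)" by simp
  fix A :: "'i \<Rightarrow> real set" assume A: "\<And>i. i \<in> I \<Longrightarrow> A i \<in> sets lborel"
  have meas: "(\<lambda>x. \<lambda>i\<in>I. c + x i) \<in> measurable (LB I) (LB I)" by measurable
  have pre: "(\<lambda>x. \<lambda>i\<in>I. c + x i) -` Pi\<^sub>E I A \<inter> space (LB I) = Pi\<^sub>E I (\<lambda>i. (+) c -` A i)"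
    by (auto simp: space_PiM PiE_def Pi_def extensional_def)
  have tr: "emeasure lborel ((+) c -` A i) = emeasure lborel (A i)" if "i \<in> I" for i
  proof -
    have "emeasure lborel (A i) = emeasure (distr lborel borel ((+) c)) (A i)"
      by (simp add: lborel_distr_plus)
    also have "\<dots> = emeasure lborel ((+) c -` A i \<inter> space lborel)"
      using A[OF that] by (subst emeasure_distr) auto
    finally show ?thesis by simp
  qed
  have "emeasure (distr (LB I) (LB I) (\<lambda>x. \<lambda>i\<in>I. c + x i)) (Pi\<^sub>E I A)
      = emeasure (LB I) (Pi\<^sub>E I (\<lambda>i. (+) c -` A i))"
    using A by (subst emeasure_distr[OF meas]) (auto intro!: sets_PiM_I_finite I simp: pre)
  also have "\<dots> = (\<Prod>i\<in>I. emeasure lborel ((+) c -` A i))"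
    using A I by (subst product_sigma_finite.emeasure_PiM[OF psf_lborel]) (auto intro: plus_pre_sets)
  also have "\<dots> = (\<Prod>i\<in>I. emeasure lborel (A i))" using tr by (simp cong: prod.cong)
  finally show "emeasure (distr (LB I) (LB I) (\<lambda>x. \<lambda>i\<in>I. c + x i)) (Pi\<^sub>E I A) = (\<Prod>i\<in>I. emeasure lborel (A i))" .
qed



lemma sf_LB: "finite I \<Longrightarrow> sigma_finite_measure (LB I)"
proof -
  assume I: "finite I"
  interpret product_sigma_finite "\<lambda>_. lborel::real measure" by (rule psf_lborel)
  interpret finite_product_sigma_finite "\<lambda>_. lborel::real measure" I by standard (rule I)
  show ?thesis by (rule sigma_finite_measure_axioms)
qed

lemma null_by_lines:
  fixes I :: "'i set" assumes I: "finite I" and A: "A \<in> sets (LB I)"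
    and lines: "\<And>x. x \<in> space (LB I) \<Longrightarrow> {c. (\<lambda>i\<in>I. c + x i) \<in> A} \<in> null_sets lborel"
  shows "emeasure (LB I) A = 0"
proof -
  interpret P: pair_sigma_finite lborel "LB I"
    by (intro pair_sigma_finite.intro lborel.sigma_finite_measure_axioms sf_LB I)
  let ?T = "\<lambda>c x. \<lambda>i\<in>I. c + x i"
  have Tm: "?T c \<in> measurable (LB I) (LB I)" for c by measurable
  have fm: "(\<lambda>(c,x). indicator {0..1} c * indicator A (?T c x) :: ennreal)
      \<in> borel_measurable (lborel \<Otimes>\<^sub>M LB I)"
    using A by measurable
  have eq: "emeasure (LB I) A = (\<integral>\<^sup>+x. indicator A (?T c x) \<partial>LB I)" for c
  proof -
    have "emeasure (LB I) A = (\<integral>\<^sup>+x. indicator A x \<partial>LB I)" using A by simp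
    also have "\<dots> = (\<integral>\<^sup>+x. indicator A x \<partial>distr (LB I) (LB I) (?T c))"
      by (simp add: PiM_translate[OF I])
    also have "\<dots> = (\<integral>\<^sup>+x. indicator A (?T c x) \<partial>LB I)"
      using A by (subst nn_integral_distr[OF Tm]) auto
    finally show ?thesis .
  qed
  have "emeasure (LB I) A = (\<integral>\<^sup>+c. emeasure (LB I) A * indicator {0..1::real} c \<partial>lborel)"
    by (subst nn_integral_cmult_indicator) (auto simp: atLeastAtMost_borel)
  also have "\<dots> = (\<integral>\<^sup>+c. (\<integral>\<^sup>+x. indicator {0..1} c * indicator A (?T c x) \<partial>LB I) \<partial>lborel)"
  proof (rule nn_integral_cong)
    fix c :: real
    show "emeasure (LB I) A * indicator {0..1} c = (\<integral>\<^sup>+x. indicator {0..1} c * indicator A (?T c x) \<partial>LB I)"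
      using A by (subst nn_integral_cmult) (auto simp: eq[of c] mult.commute)
  qed
  also have "\<dots> = (\<integral>\<^sup>+x. (\<integral>\<^sup>+c. indicator {0..1} c * indicator A (?T c x) \<partial>lborel) \<partial>LB I)"
    using P.Fubini'[OF fm] by (simp only: split_beta')
  also have "\<dots> = (\<integral>\<^sup>+x. 0 \<partial>LB I)"
  proof (rule nn_integral_cong)
    fix x assume x: "x \<in> space (LB I)"
    have "AE c in lborel. c \<notin> {c. ?T c x \<in> A}"
      using lines[OF x] by (rule AE_not_in)
    then have "AE c in lborel. indicator {0..1} c * indicator A (?T c x) = (0::ennreal)"
      by eventually_elim (auto simp: indicator_def)
    then have "(\<integral>\<^sup>+c. indicator {0..1} c * indicator A (?T c x) \<partial>lborel) = (\<integral>\<^sup>+c. 0 \<partial>lborel)"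
      using nn_integral_cong_AE[of "\<lambda>c. indicator {0..1} c * indicator A (?T c x)" "\<lambda>_. 0::ennreal" lborel] by simp
    then show "(\<integral>\<^sup>+c. indicator {0..1} c * indicator A (?T c x) \<partial>lborel) = 0" by simp
  qed
  finally show ?thesis by simp
qed

lemma hyperplane_null:
  fixes I :: "'i set" assumes I: "finite I" and ij: "i \<in> I" "j \<in> I" "i \<noteq> j"
  shows "{x\<in>space (LB I). x i = x j} \<in> null_sets (LB I)"
proof -
  interpret product_sigma_finite "\<lambda>_. lborel::real measure" by (rule psf_lborel)
  let ?H = "{x\<in>space (LB I). x i = x j}"
  have Hs: "?H \<in> sets (LB I)" using ij by measurable
  have II: "insert i (I - {i}) = I" using ij by auto
  have "emeasure (LB I) ?H = (\<integral>\<^sup>+x. indicator ?H x \<partial>LB (insert i (I - {i})))"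
    using Hs II by simp
  also have "\<dots> = (\<integral>\<^sup>+x. (\<integral>\<^sup>+y. indicator ?H (x(i := y)) \<partial>lborel) \<partial>LB (I - {i}))"
    using Hs II I by (subst product_nn_integral_insert) auto
  also have "\<dots> = (\<integral>\<^sup>+x. (\<integral>\<^sup>+y. indicator {x j} y \<partial>lborel) \<partial>LB (I - {i}))"
  proof (rule nn_integral_cong)
    fix x assume x: "x \<in> space (LB (I - {i}))"
    show "(\<integral>\<^sup>+y. indicator ?H (x(i := y)) \<partial>lborel) = (\<integral>\<^sup>+y. indicator {x j} y \<partial>lborel)"
    proof (rule nn_integral_cong)
      fix y
      have "x(i := y) \<in> space (LB I)" using x ij by (auto simp: space_PiM PiE_def extensional_def)
      then show "indicator ?H (x(i := y)) = (indicator {x j} y :: ennreal)"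
        using ij by (auto simp: indicator_def)
    qed
  qed
  also have "\<dots> = 0" by simp
  finally show ?thesis using Hs by auto
qed



lemma comp_meas: "j \<in> I \<Longrightarrow> (\<lambda>x. x j) \<in> borel_measurable (LB I)"
  by measurable

lemma sigma_hat_meas: "sigma_hat m R \<in> borel_measurable (LB {1..m})"
proof -
  have "(\<lambda>x. \<Sum>j=2..m. gam m R j * (x j - x (j - 1))) \<in> borel_measurable (LB {1..m})"
    by (intro borel_measurable_sum borel_measurable_times borel_measurable_diff borel_measurable_const comp_meas) auto
  then show ?thesis unfolding sigma_hat_def[abs_def] by measurable
qed

definition Dx where "Dx \<theta> m R x s = expF (theta_hat m R x) s - expF \<theta> s"

lemma Dx_meas: "(\<lambda>x. Dx \<theta> m R x s) \<in> borel_measurable (LB {1..m})" if "1 \<le> m"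
proof -
  have [measurable]: "(\<lambda>x. x 1) \<in> borel_measurable (LB {1..m})" using that by (intro comp_meas) auto
  note sigma_hat_meas[measurable]
  show ?thesis unfolding Dx_def expF_def theta_hat_def mu_hat_def by measurable
qed

lemma Dx_cont: "continuous_on UNIV (Dx \<theta> m R x)"
  unfolding Dx_def[abs_def] using expF_cont by (intro continuous_intros) auto

lemma cont_rats: fixes g :: "real \<Rightarrow> real" assumes "continuous_on UNIV g" "\<forall>q\<in>\<rat>. (g q :: real) \<le> t" shows "g s \<le> t"
proof -
  have "closed {s. g s \<le> t}" by (rule closed_Collect_le[OF assms(1)]) auto
  moreover have "\<rat> \<subseteq> {s. g s \<le> t}" using assms(2) by auto
  ultimately have "closure \<rat> \<subseteq> {s. g s \<le> t}" by (rule closure_minimal[rotated])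
  then show ?thesis using Rats_closure_real by auto
qed

lemma Sup_unbdd: "\<not> bdd_above X \<Longrightarrow> Sup X = Sup (UNIV::real set)"
  unfolding Sup_real_def bdd_above_def by (metis UNIV_I)

lemma K_alt: "Kstat m R \<theta> x = (SUP s. \<bar>Dx \<theta> m R x s\<bar>)"
  by (simp add: Kstat_def Dx_def)

lemma abs_Dx_cont: "continuous_on UNIV (\<lambda>s. \<bar>Dx \<theta> m R x s\<bar>)"
  using Dx_cont by (intro continuous_intros) auto

lemma all_rat: "(\<forall>r::rat. \<bar>Dx \<theta> m R x (of_rat r)\<bar> \<le> t) \<longleftrightarrow> (\<forall>s. \<bar>Dx \<theta> m R x s\<bar> \<le> t)"
proof
  assume a: "\<forall>r::rat. \<bar>Dx \<theta> m R x (of_rat r)\<bar> \<le> t"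
  show "\<forall>s. \<bar>Dx \<theta> m R x s\<bar> \<le> t"
  proof
    fix s show "\<bar>Dx \<theta> m R x s\<bar> \<le> t"
      by (rule cont_rats[OF abs_Dx_cont]) (use a in \<open>auto simp: Rats_def\<close>)
  qed
qed auto

lemma bdd_iff: "bdd_above (range (\<lambda>s. \<bar>Dx \<theta> m R x s\<bar>)) \<longleftrightarrow> (\<exists>n::nat. \<forall>r::rat. \<bar>Dx \<theta> m R x (of_rat r)\<bar> \<le> real n)"
proof
  assume "bdd_above (range (\<lambda>s. \<bar>Dx \<theta> m R x s\<bar>))"
  then obtain z where z: "\<And>s. \<bar>Dx \<theta> m R x s\<bar> \<le> z" by (auto simp: bdd_above_def)
  obtain n :: nat where "z \<le> real n" using real_arch_simple by blast
  then show "\<exists>n::nat. \<forall>r::rat. \<bar>Dx \<theta> m R x (of_rat r)\<bar> \<le> real n" using z by (meson order_trans)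
next
  assume "\<exists>n::nat. \<forall>r::rat. \<bar>Dx \<theta> m R x (of_rat r)\<bar> \<le> real n"
  then obtain n :: nat where "\<forall>r::rat. \<bar>Dx \<theta> m R x (of_rat r)\<bar> \<le> real n" by blast
  then have "\<forall>s. \<bar>Dx \<theta> m R x s\<bar> \<le> real n" using all_rat by blast
  then show "bdd_above (range (\<lambda>s. \<bar>Dx \<theta> m R x s\<bar>))" by (intro bdd_aboveI[of _ "real n"]) auto
qed

lemma K_le_iff: "Kstat m R \<theta> x \<le> t \<longleftrightarrow>
   ((\<exists>n::nat. \<forall>r::rat. \<bar>Dx \<theta> m R x (of_rat r)\<bar> \<le> real n) \<and> (\<forall>r::rat. \<bar>Dx \<theta> m R x (of_rat r)\<bar> \<le> t))
   \<or> (\<not> (\<exists>n::nat. \<forall>r::rat. \<bar>Dx \<theta> m R x (of_rat r)\<bar> \<le> real n) \<and> Sup (UNIV::real set) \<le> t)"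
proof (cases "bdd_above (range (\<lambda>s. \<bar>Dx \<theta> m R x s\<bar>))")
  case True
  then have "Kstat m R \<theta> x \<le> t \<longleftrightarrow> (\<forall>s. \<bar>Dx \<theta> m R x s\<bar> \<le> t)"
    unfolding K_alt by (subst cSUP_le_iff) auto
  with True show ?thesis unfolding bdd_iff all_rat by blast
next
  case False
  then have "Kstat m R \<theta> x = Sup (UNIV::real set)" unfolding K_alt by (rule Sup_unbdd)
  with False show ?thesis unfolding bdd_iff by auto
qed

lemma K_meas: "1 \<le> m \<Longrightarrow> Measurable.pred (LB {1..m}) (\<lambda>x. Kstat m R \<theta> x \<le> t)"
  unfolding K_le_iff using Dx_meas by measurable

lemma E_meas: "1 \<le> m \<Longrightarrow> Measurable.pred (LB {1..m}) (\<lambda>x. \<forall>s. \<bar>Dx \<theta> m R x s\<bar> \<le> t)"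
  unfolding all_rat[symmetric] using Dx_meas by measurable



lemma FTC_exp:
  fixes g \<sigma> :: real assumes g: "g > 0" and s: "\<sigma> > 0"
  shows "(\<integral>\<^sup>+y. ennreal (g/\<sigma> * exp(-g*(y-\<mu>)/\<sigma>)) * indicator {a..} y \<partial>lborel) = ennreal (exp(-g*(a-\<mu>)/\<sigma>))"
proof -
  have lim: "((\<lambda>y. - exp (-g*(y-\<mu>)/\<sigma>)) \<longlongrightarrow> 0) at_top" using g s by real_asymp
  have "(\<integral>\<^sup>+y. ennreal (g/\<sigma> * exp(-g*(y-\<mu>)/\<sigma>)) * indicator {a..} y \<partial>lborel) = ennreal (0 - (- exp (-g*(a-\<mu>)/\<sigma>)))"
  proof (rule nn_integral_FTC_atLeast[OF _ _ _ lim])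
    show "(\<lambda>y. g/\<sigma> * exp(-g*(y-\<mu>)/\<sigma>)) \<in> borel_measurable borel" by measurable
    show "DERIV (\<lambda>y. - exp (-g*(y-\<mu>)/\<sigma>)) x :> g/\<sigma> * exp(-g*(x-\<mu>)/\<sigma>)" for x
      using s by (auto intro!: derivative_eq_intros simp: field_simps)
    show "0 \<le> g/\<sigma> * exp(-g*(x-\<mu>)/\<sigma>)" for x using g s by simp
  qed
  then show ?thesis by simp
qed

lemma gam_Suc: "k < m \<Longrightarrow> gam m R k = real (R k) + 1 + gam m R (Suc k)"
  unfolding gam_def by (subst sum.atLeast_Suc_atMost) auto

lemma gam_pos: "k \<le> m \<Longrightarrow> gam m R k > 0"
  unfolding gam_def by (rule sum_pos) auto

definition hh where "hh m R \<theta> j y = gam m R j / snd \<theta> * exp(-(real (R j) + 1)*(y - fst \<theta>)/snd \<theta>)"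
definition ee where "ee m R \<theta> k y = gam m R k / snd \<theta> * exp(-gam m R k*(y - fst \<theta>)/snd \<theta>)"
definition QQ where "QQ m R \<theta> k x = (if (\<forall>j\<in>{1..<k}. x j \<le> x (Suc j)) \<and> fst \<theta> < x 1
   then (\<Prod>j\<in>{1..<k}. hh m R \<theta> j (x j)) * ee m R \<theta> k (x k) else 0)"

lemma QQ_meas: "(\<lambda>x. ennreal (QQ m R \<theta> k x)) \<in> borel_measurable (LB {1..k})" if "1 \<le> k"
proof -
  have c: "j \<in> {1..k} \<Longrightarrow> (\<lambda>x. x j) \<in> borel_measurable (LB {1..k})" for j by measurable
  have p1: "Measurable.pred (LB {1..k}) (\<lambda>x. \<forall>j\<in>{1..<k}. x j \<le> x (Suc j))"
  proof (intro pred_intros_finite)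
    fix j assume j: "j \<in> {1..<k}"
    then have [measurable]: "(\<lambda>x. x j) \<in> borel_measurable (LB {1..k})"
      "(\<lambda>x. x (Suc j)) \<in> borel_measurable (LB {1..k})" by (auto intro: c)
    show "Measurable.pred (LB {1..k}) (\<lambda>x. x j \<le> x (Suc j))" unfolding pred_def
      using j by (intro borel_measurable_le c) auto
  qed simp
  have p2: "(\<lambda>x. \<Prod>j\<in>{1..<k}. hh m R \<theta> j (x j)) \<in> borel_measurable (LB {1..k})"
    unfolding hh_def by (intro borel_measurable_prod) (auto intro!: borel_measurable_times borel_measurable_divide borel_measurable_exp borel_measurable_diff c)
  have p3: "(\<lambda>x. ee m R \<theta> k (x k)) \<in> borel_measurable (LB {1..k})"
  proof (rule measurable_compose[OF c[of k]])
    show "k \<in> {1..k}" using that by simp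
    show "ee m R \<theta> k \<in> borel_measurable borel" unfolding ee_def[abs_def] by measurable
  qed
  have p4: "(\<lambda>x. x 1) \<in> borel_measurable (LB {1..k})" using c that by auto
  show ?thesis unfolding QQ_def using p1 p2 p3 p4 by measurable
qed

lemma gam_nonneg: "gam m R k \<ge> 0"
  unfolding gam_def by (rule sum_nonneg) auto

lemma hh_nonneg: "snd \<theta> > 0 \<Longrightarrow> hh m R \<theta> j y \<ge> 0"
  unfolding hh_def using gam_nonneg by simp
lemma ee_nonneg: "snd \<theta> > 0 \<Longrightarrow> ee m R \<theta> j y \<ge> 0"
  unfolding ee_def using gam_nonneg by simp

definition CC where "CC m R \<theta> k x = (if (\<forall>j\<in>{1..<k}. x j \<le> x (Suc j)) \<and> fst \<theta> < x 1
   then (\<Prod>j\<in>{1..<k}. hh m R \<theta> j (x j)) * hh m R \<theta> k (x k) else 0)"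

lemma QQ_step1:
  assumes "1 \<le> k"
  shows "QQ m R \<theta> (Suc k) (x(Suc k := y)) = CC m R \<theta> k x * (ee m R \<theta> (Suc k) y * indicator {x k..} y)"
proof -
  let ?x = "x(Suc k := y)"
  have o: "(\<forall>j\<in>{1..<Suc k}. ?x j \<le> ?x (Suc j)) \<longleftrightarrow> (\<forall>j\<in>{1..<k}. x j \<le> x (Suc j)) \<and> x k \<le> y"
  proof -
    have "(\<forall>j\<in>{1..<Suc k}. ?x j \<le> ?x (Suc j)) \<longleftrightarrow> (\<forall>j\<in>insert k {1..<k}. ?x j \<le> ?x (Suc j))"
      using assms by (intro ball_cong) auto
    also have "\<dots> \<longleftrightarrow> (\<forall>j\<in>{1..<k}. x j \<le> x (Suc j)) \<and> x k \<le> y"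
      by auto
    finally show ?thesis .
  qed
  have p: "(\<Prod>j\<in>{1..<Suc k}. hh m R \<theta> j (?x j)) = (\<Prod>j\<in>{1..<k}. hh m R \<theta> j (x j)) * hh m R \<theta> k (x k)"
  proof -
    have "{1..<Suc k} = insert k {1..<k}" using assms by auto
    then have "(\<Prod>j\<in>{1..<Suc k}. hh m R \<theta> j (?x j)) = hh m R \<theta> k (?x k) * (\<Prod>j\<in>{1..<k}. hh m R \<theta> j (?x j))"
      by simp
    also have "(\<Prod>j\<in>{1..<k}. hh m R \<theta> j (?x j)) = (\<Prod>j\<in>{1..<k}. hh m R \<theta> j (x j))"
      by (rule prod.cong) auto
    finally show ?thesis by simp
  qed
  have x1: "?x 1 = x 1" using assms by simp
  show ?thesis unfolding QQ_def CC_def o p x1 by (auto simp: indicator_def)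
qed

lemma CC_QQ:
  assumes "k < m" "snd \<theta> > 0"
  shows "CC m R \<theta> k x * exp(-gam m R (Suc k) * (x k - fst \<theta>)/snd \<theta>) = QQ m R \<theta> k x"
proof -
  have "hh m R \<theta> k (x k) * exp(-gam m R (Suc k) * (x k - fst \<theta>)/snd \<theta>) = ee m R \<theta> k (x k)"
    unfolding hh_def ee_def gam_Suc[OF assms(1), of R]
    using assms(2) by (simp add: mult.assoc flip: exp_add) (simp add: field_simps)
  then show ?thesis unfolding CC_def QQ_def by (auto simp: mult.assoc)
qed

lemma QQ_int:
  assumes s: "snd \<theta> > 0"
  shows "1 \<le> k \<Longrightarrow> k \<le> m \<Longrightarrow> (\<integral>\<^sup>+x. ennreal (QQ m R \<theta> k x) \<partial>LB {1..k}) = 1"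
proof (induction k rule: nat_induct_at_least)
  case base
  interpret product_sigma_finite "\<lambda>_. lborel::real measure" by (rule psf_lborel)
  let ?g = "gam m R 1"
  have g: "?g > 0" using base gam_pos by auto
  have "(\<integral>\<^sup>+x. ennreal (QQ m R \<theta> 1 x) \<partial>LB {1..1}) =
        (\<integral>\<^sup>+x. (\<lambda>y. ennreal (if fst \<theta> < y then ee m R \<theta> 1 y else 0)) (x 1) \<partial>LB {1::nat})"
  proof -
    have "\<And>x. QQ m R \<theta> 1 x = (if fst \<theta> < x 1 then ee m R \<theta> 1 (x 1) else 0)" by (simp add: QQ_def)
    then show ?thesis unfolding atLeastAtMost_singleton by (simp add: One_nat_def)
  qed
  also have "\<dots> = (\<integral>\<^sup>+y. ennreal (if fst \<theta> < y then ee m R \<theta> 1 y else 0) \<partial>lborel)"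
    by (rule product_nn_integral_singleton) (unfold ee_def, measurable)
  also have "\<dots> = (\<integral>\<^sup>+y. ennreal (?g/snd \<theta> * exp(-?g*(y-fst \<theta>)/snd \<theta>)) * indicator {fst \<theta>..} y \<partial>lborel)"
  proof (rule nn_integral_cong_AE)
    show "AE y in lborel. ennreal (if fst \<theta> < y then ee m R \<theta> 1 y else 0) =
        ennreal (?g/snd \<theta> * exp(-?g*(y-fst \<theta>)/snd \<theta>)) * indicator {fst \<theta>..} y"
      using AE_lborel_singleton[of "fst \<theta>"] by eventually_elim (auto simp: ee_def indicator_def)
  qed
  also have "\<dots> = ennreal (exp(-?g*(fst \<theta>-fst \<theta>)/snd \<theta>))" by (rule FTC_exp[OF g s])
  finally show ?case by simp
next
  case (Suc k)
  interpret product_sigma_finite "\<lambda>_. lborel::real measure" by (rule psf_lborel)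
  have km: "k < m" using Suc by simp
  have ins: "{1..Suc k} = insert (Suc k) {1..k}" by auto
  have g: "gam m R (Suc k) > 0" using Suc gam_pos by auto
  have "(\<integral>\<^sup>+x. ennreal (QQ m R \<theta> (Suc k) x) \<partial>LB {1..Suc k})
      = (\<integral>\<^sup>+x. (\<integral>\<^sup>+y. ennreal (QQ m R \<theta> (Suc k) (x(Suc k := y))) \<partial>lborel) \<partial>LB {1..k})"
    unfolding ins by (rule product_nn_integral_insert) (use QQ_meas[of "Suc k"] ins in auto)
  also have "\<dots> = (\<integral>\<^sup>+x. ennreal (QQ m R \<theta> k x) \<partial>LB {1..k})"
  proof (rule nn_integral_cong)
    fix x :: "nat \<Rightarrow> real"
    have C: "CC m R \<theta> k x \<ge> 0" unfolding CC_def using hh_nonneg[OF s]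
      by (auto intro!: prod_nonneg mult_nonneg_nonneg)
    have "(\<integral>\<^sup>+y. ennreal (QQ m R \<theta> (Suc k) (x(Suc k := y))) \<partial>lborel)
        = (\<integral>\<^sup>+y. ennreal (CC m R \<theta> k x) * (ennreal (ee m R \<theta> (Suc k) y) * indicator {x k..} y) \<partial>lborel)"
      unfolding QQ_step1[OF Suc.hyps]
      using C ee_nonneg[OF s]
      by (intro nn_integral_cong) (auto simp: indicator_def ennreal_mult)
    also have "\<dots> = ennreal (CC m R \<theta> k x) * (\<integral>\<^sup>+y. ennreal (ee m R \<theta> (Suc k) y) * indicator {x k..} y \<partial>lborel)"
      by (rule nn_integral_cmult) (simp add: ee_def)
    also have "(\<integral>\<^sup>+y. ennreal (ee m R \<theta> (Suc k) y) * indicator {x k..} y \<partial>lborel)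
        = ennreal (exp(-gam m R (Suc k)*(x k-fst \<theta>)/snd \<theta>))"
      unfolding ee_def by (rule FTC_exp[OF g s])
    also have "ennreal (CC m R \<theta> k x) * \<dots> = ennreal (QQ m R \<theta> k x)"
      using C CC_QQ[OF km s, of R x] by (simp add: ennreal_mult[symmetric])
    finally show "(\<integral>\<^sup>+y. ennreal (QQ m R \<theta> (Suc k) (x(Suc k := y))) \<partial>lborel) = ennreal (QQ m R \<theta> k x)" .
  qed
  also have "\<dots> = 1" using Suc by simp
  finally show ?case .
qed



lemma ord_ge1: "(\<forall>j\<in>{1..<m}. x j \<le> x (Suc j)) \<Longrightarrow> j \<in> {1..m} \<Longrightarrow> (x 1 :: real) \<le> x j"
proof (induction j)
  case 0 then show ?case by simp
next
  case (Suc j)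
  show ?case
  proof (cases "j = 0")
    case True then show ?thesis by simp
  next
    case False
    then have "x 1 \<le> x j" using Suc by auto
    moreover have "x j \<le> x (Suc j)" using Suc False by auto
    ultimately show ?thesis by linarith
  qed
qed

lemma pc_QQ:
  assumes s: "snd \<theta> > 0" and m: "1 \<le> m"
  shows "pc_density m R \<theta> x = QQ m R \<theta> m x"
proof (cases "\<forall>j\<in>{1..<m}. x j \<le> x (Suc j)")
  case False then show ?thesis unfolding pc_density_def QQ_def by (simp only: if_False simp_thms)
next
  case ord: True
  show ?thesis
  proof (cases "fst \<theta> < x 1")
    case False
    have "(\<Prod>j=1..m. gam m R j * expf \<theta> (x j) * (1 - expF \<theta> (x j)) ^ R j) = 0"
      using False m by (intro prod_zero) (auto intro!: bexI[of _ 1] simp: expf_def)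
    then show ?thesis using False ord by (simp add: pc_density_def QQ_def)
  next
    case True
    have gt: "fst \<theta> < x j" if "j \<in> {1..m}" for j using ord_ge1[OF ord that] True by linarith
    have f: "gam m R j * expf \<theta> (x j) * (1 - expF \<theta> (x j)) ^ R j = hh m R \<theta> j (x j)" if "j \<in> {1..m}" for j
    proof -
      have "(1 - expF \<theta> (x j)) ^ R j = exp (real (R j) * (-(x j - fst \<theta>) / snd \<theta>))"
        using gt[OF that] by (simp add: expF_def exp_of_nat_mult[symmetric] times_divide_eq_right)
      then show ?thesis using gt[OF that] s unfolding hh_def expf_def
        by (simp add: mult.assoc flip: exp_add) (simp add: field_simps)
    qed
    have "(\<Prod>j=1..m. gam m R j * expf \<theta> (x j) * (1 - expF \<theta> (x j)) ^ R j) = (\<Prod>j=1..m. hh m R \<theta> j (x j))"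
      using f by (rule prod.cong[OF refl])
    also have "\<dots> = (\<Prod>j\<in>{1..<m}. hh m R \<theta> j (x j)) * hh m R \<theta> m (x m)"
    proof -
      have "{1..m} = insert m {1..<m}" using m by auto
      then show ?thesis by (simp add: mult.commute)
    qed
    also have "hh m R \<theta> m (x m) = ee m R \<theta> m (x m)"
      unfolding hh_def ee_def gam_def by (simp add: add.commute)
    finally show ?thesis using ord True by (simp add: pc_density_def QQ_def)
  qed
qed

lemma sigma_hat_pos:
  assumes ord: "\<forall>j\<in>{1..<m}. x j \<le> x (Suc j)" and m: "2 \<le> m" and x12: "x 1 < x 2"
  shows "sigma_hat m R x > 0"
proof -
  let ?f = "\<lambda>j. gam m R j * (x j - x (j - 1))"
  have nn: "?f j \<ge> 0" if "j \<in> {2..m}" for j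
  proof -
    have "j - 1 \<in> {1..<m}" using that by auto
    then have "x (j - 1) \<le> x (Suc (j - 1))" using ord by blast
    then show ?thesis using that gam_nonneg by (simp add: Suc_diff_1)
  qed
  have "?f 2 > 0" using gam_pos[OF m] x12 by (simp add: numeral_2_eq_2)
  moreover have "?f 2 \<le> (\<Sum>j=2..m. ?f j)" using m nn by (intro member_le_sum) auto
  ultimately have "(\<Sum>j=2..m. ?f j) > 0" by linarith
  then show ?thesis using m unfolding sigma_hat_def by simp
qed

lemma sigma_hat_T: "sigma_hat m R (\<lambda>i\<in>{1..m}. c + x i) = sigma_hat m R x"
  unfolding sigma_hat_def by (intro arg_cong[where f="\<lambda>s. 1 / real m * s"] sum.cong) auto

lemma Dx_Dd: "Dx \<theta> m R x s = Dd (fst \<theta>) (snd \<theta>) (sigma_hat m R x) (x 1) s"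
  by (simp add: Dx_def Dd_def theta_hat_def mu_hat_def)

lemma K_borel: "1 \<le> m \<Longrightarrow> Kstat m R \<theta> \<in> borel_measurable (LB {1..m})"
  by (rule borel_measurableI_le) (use K_meas in \<open>auto simp: pred_def\<close>)



locale ps = fixes m :: nat and R :: "nat \<Rightarrow> nat" and \<theta> :: "real \<times> real"
  assumes m: "1 < m" and sp: "snd \<theta> > 0"
begin

abbreviation "M \<equiv> LB {1..m} :: (nat \<Rightarrow> real) measure"
abbreviation "P \<equiv> P_pc m R \<theta>"
definition "Good x \<longleftrightarrow> (\<forall>j\<in>{1..<m}. x j \<le> x (Suc j)) \<and> fst \<theta> < x 1 \<and> sigma_hat m R x > 0"

lemma dens_eq: "(\<lambda>x. ennreal (pc_density m R \<theta> x)) = (\<lambda>x. ennreal (QQ m R \<theta> m x))"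
  using pc_QQ[OF sp] m by auto

lemma dens_meas: "(\<lambda>x. ennreal (pc_density m R \<theta> x)) \<in> borel_measurable M"
  unfolding dens_eq using QQ_meas[of m] m by simp

lemma space_P[simp]: "space P = space M" by (simp add: P_pc_def)
lemma sets_P[simp]: "sets P = sets M" by (simp add: P_pc_def)

lemma prob: "prob_space P"
proof (rule prob_spaceI)
  have "emeasure P (space P) = (\<integral>\<^sup>+x. ennreal (pc_density m R \<theta> x) * indicator (space M) x \<partial>M)"
    unfolding P_pc_def by (subst emeasure_density[OF dens_meas]) auto
  also have "\<dots> = (\<integral>\<^sup>+x. ennreal (QQ m R \<theta> m x) \<partial>M)"
    using pc_QQ[OF sp] m by (intro nn_integral_cong) auto
  also have "\<dots> = 1" using QQ_int[OF sp, of m m R] m by simp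
  finally show "emeasure P (space P) = 1" .
qed

lemma x_meas: "j \<in> {1..m} \<Longrightarrow> (\<lambda>x. x j) \<in> borel_measurable M" by measurable

lemma Good_meas: "Measurable.pred M Good"
proof -
  have p1: "Measurable.pred M (\<lambda>x. \<forall>j\<in>{1..<m}. x j \<le> x (Suc j))"
  proof (intro pred_intros_finite)
    fix j assume j: "j \<in> {1..<m}"
    show "Measurable.pred M (\<lambda>x. x j \<le> x (Suc j))" unfolding pred_def
      using j by (intro borel_measurable_le x_meas) auto
  qed simp
  have [measurable]: "(\<lambda>x. x 1) \<in> borel_measurable M" using m by (intro x_meas) auto
  note sigma_hat_meas[measurable]
  show ?thesis unfolding Good_def[abs_def] using p1 by measurable
qed

lemma AE_M: "AE x in M. 0 < pc_density m R \<theta> x \<longrightarrow> Good x"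
proof -
  have H: "AE x in M. x \<notin> {x\<in>space M. x 1 = x 2}"
    using m by (intro AE_not_in hyperplane_null) auto
  show ?thesis using AE_space H
  proof eventually_elim
    case (elim x)
    show ?case
    proof
      assume "0 < pc_density m R \<theta> x"
      then have "0 < QQ m R \<theta> m x" using pc_QQ[OF sp] m by simp
      then have ord: "\<forall>j\<in>{1..<m}. x j \<le> x (Suc j)" and x1: "fst \<theta> < x 1"
        by (auto simp: QQ_def split: if_splits)
      have "x 1 \<le> x 2" using ord m by (auto simp: numeral_2_eq_2)
      moreover have "x 1 \<noteq> x 2" using elim by auto
      ultimately have "x 1 < x 2" by simp
      then show "Good x" unfolding Good_def using ord x1 sigma_hat_pos[OF ord] m by auto
    qed
  qed
qed

lemma AE_P: "AE x in P. Good x"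
  unfolding P_pc_def using AE_M by (subst AE_density[OF dens_meas]) auto

lemma Good_bdd: "Good x \<Longrightarrow> \<bar>Dx \<theta> m R x s\<bar> \<le> 1"
  unfolding Dx_Dd Good_def using Dd_bnd[OF sp] by auto

lemma Good_K_le: "Good x \<Longrightarrow> Kstat m R \<theta> x \<le> t \<longleftrightarrow> (\<forall>s. \<bar>Dx \<theta> m R x s\<bar> \<le> t)"
  unfolding K_alt using Good_bdd by (subst cSUP_le_iff) (auto intro: bdd_aboveI[of _ 1])

lemma Good_K_ge: "Good x \<Longrightarrow> 0 \<le> Kstat m R \<theta> x"
  unfolding K_alt using Good_bdd
  by (intro order_trans[OF abs_ge_zero cSUP_upper[of 0]]) (auto intro: bdd_aboveI[of _ 1])

lemma Good_K_1: "Good x \<Longrightarrow> Kstat m R \<theta> x \<le> 1"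
  using Good_K_le Good_bdd by blast

lemma K_meas': "Kstat m R \<theta> \<in> borel_measurable M" using K_borel m by simp

lemma K_null: "emeasure P {x\<in>space P. Kstat m R \<theta> x = t} = 0"
proof -
  let ?L = "{x\<in>space M. Good x \<and> Kstat m R \<theta> x = t}"
  have Lm: "?L \<in> sets M" using Good_meas K_meas' by measurable
  have Lnull: "emeasure M ?L = 0"
  proof (rule null_by_lines[OF _ Lm])
    fix x assume x: "x \<in> space M"
    let ?T = "\<lambda>c. \<lambda>i\<in>{1..m}. c + x i"
    let ?U = "{u. fst \<theta> < u \<and> (SUP s. \<bar>Dd (fst \<theta>) (snd \<theta>) (sigma_hat m R x) u s\<bar>) = t}"
    have Tm: "?T \<in> measurable lborel M" by measurable
    have sub: "{c. ?T c \<in> ?L} \<subseteq> (\<lambda>u. u - x 1) ` ?U"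
    proof
      fix c assume "c \<in> {c. ?T c \<in> ?L}"
      then have G: "Good (?T c)" and K: "Kstat m R \<theta> (?T c) = t" by auto
      have T1: "?T c 1 = c + x 1" using m by simp
      have sh: "sigma_hat m R (?T c) = sigma_hat m R x" by (rule sigma_hat_T)
      have "sigma_hat m R x > 0" using G sh unfolding Good_def by simp
      have "c + x 1 \<in> ?U" using G K T1 sh unfolding Good_def K_alt Dx_Dd by simp
      then show "c \<in> (\<lambda>u. u - x 1) ` ?U" by (intro image_eqI[of _ _ "c + x 1"]) auto
    qed
    have "sigma_hat m R x > 0 \<or> {c. ?T c \<in> ?L} = {}"
    proof (rule disjCI)
      assume "{c. ?T c \<in> ?L} \<noteq> {}"
      then obtain c where "Good (?T c)" by auto
      then show "sigma_hat m R x > 0" using sigma_hat_T[of m R c x] unfolding Good_def by simp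
    qed
    then have "finite {c. ?T c \<in> ?L}"
    proof
      assume "sigma_hat m R x > 0"
      then have "finite ?U" using level_finite[OF sp] by blast
      then show ?thesis using sub by (meson finite_imageI finite_subset)
    qed (metis finite.emptyI)
    then have "{c. ?T c \<in> ?L} \<in> null_sets lborel" by (rule finite_imp_null_set_lborel)
    then show "{c. ?T c \<in> ?L} \<in> null_sets lborel" .
  qed simp
  have AEL: "AE x in M. x \<notin> ?L" using Lnull Lm by (intro AE_not_in) auto
  have Km: "{x\<in>space P. Kstat m R \<theta> x = t} \<in> sets M"
  proof -
    have "{x\<in>space P. Kstat m R \<theta> x = t} = Kstat m R \<theta> -` {t} \<inter> space M" by auto
    then show ?thesis using measurable_sets[OF K_meas', of "{t}"] by simp
  qed
  have "emeasure P {x\<in>space P. Kstat m R \<theta> x = t} =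
     (\<integral>\<^sup>+x. ennreal (pc_density m R \<theta> x) * indicator {x\<in>space P. Kstat m R \<theta> x = t} x \<partial>M)"
    unfolding P_pc_def using Km by (subst emeasure_density[OF dens_meas]) auto
  also have "\<dots> = (\<integral>\<^sup>+x. 0 \<partial>M)"
  proof (rule nn_integral_cong_AE)
    show "AE x in M. ennreal (pc_density m R \<theta> x) * indicator {x\<in>space P. Kstat m R \<theta> x = t} x = 0"
      using AE_M AEL AE_space
    proof eventually_elim
      case (elim x)
      show ?case
      proof (cases "0 < pc_density m R \<theta> x")
        case True
        then have "Good x" using elim by auto
        then show ?thesis using elim by (auto simp: indicator_def)
      qed (simp add: ennreal_eq_0_iff)
    qed
  qed
  finally show ?thesis by simp
qed


definition "G t = measure P {x\<in>space P. Kstat m R \<theta> x \<le> t}"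

lemma Kle_sets: "{x\<in>space P. Kstat m R \<theta> x \<le> t} \<in> sets P"
proof -
  have "{x\<in>space P. Kstat m R \<theta> x \<le> t} = Kstat m R \<theta> -` {..t} \<inter> space M" by auto
  then show ?thesis using measurable_sets[OF K_meas', of "{..t}"] by simp
qed

lemma Kless_sets: "{x\<in>space P. Kstat m R \<theta> x < t} \<in> sets P"
proof -
  have "{x\<in>space P. Kstat m R \<theta> x < t} = Kstat m R \<theta> -` {..<t} \<inter> space M" by auto
  then show ?thesis using measurable_sets[OF K_meas', of "{..<t}"] by simp
qed

lemma G0: "t < 0 \<Longrightarrow> G t = 0"
proof -
  assume t: "t < 0"
  have "AE x in P. x \<in> {x\<in>space P. Kstat m R \<theta> x \<le> t} \<longleftrightarrow> x \<in> {}"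
    using AE_P by eventually_elim (use Good_K_ge t in force)
  then show ?thesis unfolding G_def using Kle_sets by (subst measure_eq_AE) auto
qed

lemma G1: "1 \<le> t \<Longrightarrow> G t = 1"
proof -
  assume t: "1 \<le> t"
  interpret Pp: prob_space P by (rule prob)
  have "AE x in P. x \<in> {x\<in>space P. Kstat m R \<theta> x \<le> t} \<longleftrightarrow> x \<in> space P"
    using AE_P by eventually_elim (use Good_K_1 t in force)
  then have "G t = measure P (space P)" unfolding G_def using Kle_sets by (subst measure_eq_AE) auto
  then show ?thesis using Pp.prob_space by simp
qed

lemma Gmono: "s \<le> t \<Longrightarrow> G s \<le> G t"
proof -
  assume st: "s \<le> t"
  interpret Pp: prob_space P by (rule prob)
  show ?thesis unfolding G_def using Kle_sets st by (intro Pp.finite_measure_mono) auto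
qed

lemma G_right: "(\<lambda>n. G (d + 1 / Suc n)) \<longlonglongrightarrow> G d"
proof -
  interpret Pp: prob_space P by (rule prob)
  let ?A = "\<lambda>n. {x\<in>space P. Kstat m R \<theta> x \<le> d + 1 / Suc n}"
  have "(\<lambda>n. measure P (?A n)) \<longlonglongrightarrow> measure P (\<Inter>n. ?A n)"
  proof (rule Pp.finite_Lim_measure_decseq)
    show "range ?A \<subseteq> sets P" using Kle_sets by auto
    show "decseq ?A"
    proof (rule decseq_SucI)
      fix n
      have "d + 1 / Suc (Suc n) \<le> d + 1 / Suc n" by (simp add: frac_le)
      then show "?A (Suc n) \<subseteq> ?A n" by auto
    qed
  qed
  moreover have "(\<Inter>n. ?A n) = {x\<in>space P. Kstat m R \<theta> x \<le> d}"
  proof safe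
    fix x assume x: "x \<in> (\<Inter>n. ?A n)"
    show "Kstat m R \<theta> x \<le> d"
    proof (rule ccontr)
      assume "\<not> Kstat m R \<theta> x \<le> d"
      then obtain n where n: "inverse (real (Suc n)) < Kstat m R \<theta> x - d"
        using reals_Archimedean by (metis diff_gt_0_iff_gt not_le)
      have "x \<in> ?A n" using x by blast
      then have "Kstat m R \<theta> x \<le> d + 1 / Suc n" by simp
      then show False using n by (simp add: inverse_eq_divide)
    qed
  next
    fix x n assume "Kstat m R \<theta> x \<le> d"
    moreover have "0 \<le> 1 / real (Suc n)" by simp
    ultimately show "Kstat m R \<theta> x \<le> d + 1 / Suc n" by linarith
  qed auto
  ultimately show ?thesis unfolding G_def by simp
qed

lemma G_left: "(\<lambda>n. G (d - 1 / Suc n)) \<longlonglongrightarrow> G d"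
proof -
  interpret Pp: prob_space P by (rule prob)
  let ?A = "\<lambda>n. {x\<in>space P. Kstat m R \<theta> x \<le> d - 1 / Suc n}"
  have "(\<lambda>n. measure P (?A n)) \<longlonglongrightarrow> measure P (\<Union>n. ?A n)"
  proof (rule Pp.finite_Lim_measure_incseq)
    show "range ?A \<subseteq> sets P" using Kle_sets by auto
    show "incseq ?A"
    proof (rule incseq_SucI)
      fix n
      have "d - 1 / Suc n \<le> d - 1 / Suc (Suc n)" by (simp add: frac_le)
      then show "?A n \<subseteq> ?A (Suc n)" by auto
    qed
  qed
  moreover have "(\<Union>n. ?A n) = {x\<in>space P. Kstat m R \<theta> x < d}"
  proof safe
    fix x n assume "Kstat m R \<theta> x \<le> d - 1 / Suc n"
    moreover have "0 < 1 / real (Suc n)" by simp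
    ultimately show "Kstat m R \<theta> x < d" by linarith
  next
    fix x assume x: "x \<in> space P" "Kstat m R \<theta> x < d"
    then obtain n where "inverse (real (Suc n)) < d - Kstat m R \<theta> x"
      using reals_Archimedean by (metis diff_gt_0_iff_gt)
    then show "x \<in> (\<Union>n. ?A n)" using x by (auto simp: field_simps intro!: exI[of _ n])
  qed
  moreover have "measure P {x\<in>space P. Kstat m R \<theta> x < d} = G d"
  proof -
    have eq: "{x\<in>space P. Kstat m R \<theta> x \<le> d} = {x\<in>space P. Kstat m R \<theta> x < d} \<union> {x\<in>space P. Kstat m R \<theta> x = d}"
      by auto
    have "{x\<in>space P. Kstat m R \<theta> x = d} = {x\<in>space P. Kstat m R \<theta> x \<le> d} - {x\<in>space P. Kstat m R \<theta> x < d}"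
      by auto
    then have "{x\<in>space P. Kstat m R \<theta> x = d} \<in> sets P" using Kle_sets Kless_sets by simp
    then have "{x\<in>space P. Kstat m R \<theta> x = d} \<in> null_sets P"
      using K_null[of d] by (intro null_setsI) auto
    then show ?thesis unfolding G_def eq by (subst measure_Un_null_set[OF Kless_sets]) auto
  qed
  ultimately show ?thesis unfolding G_def by simp
qed

lemma quantile:
  assumes p: "0 < p" "p < 1"
  shows "G (Inf {t. G t \<ge> 1 - p}) = 1 - p"
proof -
  let ?S = "{t. G t \<ge> 1 - p}"
  define d where "d = Inf ?S"
  have "1 \<in> ?S" using G1[of 1] p by simp
  then have ne: "?S \<noteq> {}" by blast
  have bb: "bdd_below ?S"
  proof (rule bdd_belowI)
    fix t assume "t \<in> ?S"
    then show "0 \<le> t" using G0[of t] p by (cases "t < 0") auto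
  qed
  have "1 - p \<le> G d"
  proof (rule LIMSEQ_le_const[OF G_right[of d]], intro exI allI impI)
    fix n :: nat
    have "d < d + 1 / Suc n" by simp
    then obtain t where t: "t \<in> ?S" "t < d + 1 / Suc n" using cInf_lessD[OF ne] unfolding d_def by blast
    then show "1 - p \<le> G (d + 1 / Suc n)" using Gmono[of t "d + 1 / Suc n"] by auto
  qed
  moreover have "G d \<le> 1 - p"
  proof (rule LIMSEQ_le_const2[OF G_left[of d]], intro exI allI impI)
    fix n :: nat
    have "d - 1 / Suc n < d" by simp
    then have "d - 1 / Suc n \<notin> ?S" using cInf_lower[OF _ bb] unfolding d_def by (metis not_le)
    then show "G (d - 1 / Suc n) \<le> 1 - p" by simp
  qed
  ultimately show ?thesis unfolding d_def by simp
qed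

end


lemma graph_sub_iff: "graphF F \<subseteq> B \<longleftrightarrow> (\<forall>t. (t, F t) \<in> B)"
  unfolding graphF_def by auto

lemma C4'_iff: "\<theta> \<in> Theta \<Longrightarrow> \<theta> \<in> C4' m R d x \<longleftrightarrow> (\<forall>s. \<bar>Dx \<theta> m R x s\<bar> \<le> d)"
  unfolding C4'_def graph_sub_iff B4_def Dx_def by simp

lemma B4'_iff: "\<theta> \<in> Theta \<Longrightarrow> graphF (expF \<theta>) \<subseteq> B4' m R d x \<longleftrightarrow> \<theta> \<in> C4' m R d x"
proof
  assume th: "\<theta> \<in> Theta" and g: "graphF (expF \<theta>) \<subseteq> B4' m R d x"
  have "B4' m R d x \<subseteq> B4 m R d x" unfolding B4'_def C4'_def by auto
  with g th show "\<theta> \<in> C4' m R d x" unfolding C4'_def by auto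
next
  assume "\<theta> \<in> C4' m R d x"
  then show "graphF (expF \<theta>) \<subseteq> B4' m R d x" unfolding B4'_def by auto
qed

lemma B4''_iff: "\<theta> \<in> Theta \<Longrightarrow> graphF (expF \<theta>) \<subseteq> B4'' m R d x \<longleftrightarrow> \<theta> \<in> C4'' m R d x"
proof
  assume th: "\<theta> \<in> Theta" and g: "graphF (expF \<theta>) \<subseteq> B4'' m R d x"
  have "B4'' m R d x \<subseteq> B4 m R d x" unfolding B4''_def C4''_def C4'_def by auto
  with g th have c: "\<theta> \<in> C4' m R d x" unfolding C4'_def by auto
  have "fst \<theta> \<le> mu_hat x"
  proof (rule ccontr)
    assume less: "\<not> fst \<theta> \<le> mu_hat x"
    have "(fst \<theta>, expF \<theta> (fst \<theta>)) \<in> B4'' m R d x" using g unfolding graphF_def by auto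
    then obtain \<theta>' where t': "\<theta>' \<in> C4'' m R d x" and "(fst \<theta>, expF \<theta> (fst \<theta>)) \<in> graphF (expF \<theta>')"
      unfolding B4''_def by auto
    then have eq: "expF \<theta>' (fst \<theta>) = expF \<theta> (fst \<theta>)" unfolding graphF_def by auto
    have "fst \<theta>' \<le> mu_hat x" "snd \<theta>' > 0" using t' unfolding C4''_def C4'_def Theta_def by auto
    then have "fst \<theta>' < fst \<theta>" using less by simp
    then have "expF \<theta>' (fst \<theta>) > 0" using \<open>snd \<theta>' > 0\<close>
      by (simp add: expF_def divide_neg_pos)
    moreover have "expF \<theta> (fst \<theta>) = 0" by (simp add: expF_def)
    ultimately show False using eq by simp
  qed
  then show "\<theta> \<in> C4'' m R d x" using c unfolding C4''_def by auto
next
  assume "\<theta> \<in> C4'' m R d x"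
  then show "graphF (expF \<theta>) \<subseteq> B4'' m R d x" unfolding B4''_def by auto
qed

theorem mainTheorem7:
  fixes m n :: nat and R :: "nat \<Rightarrow> nat" and p :: real and \<theta> :: "real \<times> real"
  assumes "1 < m" and "m \<le> n" and "(\<Sum>j=1..m. R j) = n - m"
    and "0 < p" and "p < 1" and "\<theta> \<in> Theta"
  defines "d \<equiv> d_quant m R \<theta> p" and "P \<equiv> P_pc m R \<theta>"
  shows "measure P {x \<in> space P. \<theta> \<in> C4' m R d x} = 1 - p
       \<and> measure P {x \<in> space P. \<theta> \<in> C4'' m R d x} = 1 - p
       \<and> measure P {x \<in> space P. graphF (expF \<theta>) \<subseteq> B4' m R d x} = 1 - p
       \<and> measure P {x \<in> space P. graphF (expF \<theta>) \<subseteq> B4'' m R d x} = 1 - p"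
proof -
  have th: "\<theta> \<in> Theta" by fact
  interpret ps m R \<theta> using assms(1,6) by unfold_locales (auto simp: Theta_def)
  have dG: "d = Inf {t. G t \<ge> 1 - p}" unfolding d_def d_quant_def G_def by simp
  have Gd: "G d = 1 - p" unfolding dG by (rule quantile) fact+
  let ?E1 = "{x \<in> space P. \<theta> \<in> C4' m R d x}"
  let ?E2 = "{x \<in> space P. \<theta> \<in> C4'' m R d x}"
  have E1eq: "?E1 = {x \<in> space M. \<forall>s. \<bar>Dx \<theta> m R x s\<bar> \<le> d}"
    using C4'_iff[OF th] unfolding P_def by auto
  have E1s: "?E1 \<in> sets P"
  proof -
    have "{x \<in> space M. \<forall>s. \<bar>Dx \<theta> m R x s\<bar> \<le> d} \<in> sets M"
      using E_meas[of m \<theta> R d] assms(1) by (simp add: pred_def)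
    then show ?thesis unfolding E1eq by (simp add: P_def)
  qed
  have AE1: "AE x in P. x \<in> ?E1 \<longleftrightarrow> x \<in> {x \<in> space P. Kstat m R \<theta> x \<le> d}"
    using AE_P AE_space unfolding P_def
  proof eventually_elim
    case (elim x)
    then show ?case using Good_K_le[of x d] C4'_iff[OF th] by auto
  qed
  have Ks: "{x \<in> space P. Kstat m R \<theta> x \<le> d} \<in> sets P" using Kle_sets unfolding P_def .
  have "measure P ?E1 = measure P {x \<in> space P. Kstat m R \<theta> x \<le> d}"
    by (rule measure_eq_AE[OF AE1 E1s Ks])
  also have "\<dots> = G d" unfolding G_def P_def ..
  finally have "measure P ?E1 = G d" .
  then have r1: "measure P ?E1 = 1 - p" using Gd by simp
  have E2eq: "?E2 = ?E1 \<inter> {x \<in> space M. fst \<theta> \<le> x 1}" unfolding C4''_def mu_hat_def P_def by auto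
  have x1m: "(\<lambda>x. x 1) \<in> borel_measurable M" using assms(1) by (intro x_meas) auto
  have "{x \<in> space M. fst \<theta> \<le> x 1} = (\<lambda>x. x 1) -` {fst \<theta>..} \<inter> space M" by auto
  then have "{x \<in> space M. fst \<theta> \<le> x 1} \<in> sets P"
    using measurable_sets[OF x1m, of "{fst \<theta>..}"] unfolding P_def by simp
  then have E2s: "?E2 \<in> sets P" unfolding E2eq using E1s by (rule sets.Int[rotated])
  have "measure P ?E2 = measure P ?E1"
  proof (rule measure_eq_AE)
    show "AE x in P. x \<in> ?E2 \<longleftrightarrow> x \<in> ?E1" unfolding P_def using AE_P
      by eventually_elim (auto simp: Good_def C4''_def mu_hat_def)
  qed (use E1s E2s in auto)
  then have r2: "measure P ?E2 = 1 - p" using r1 by simp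
  have r3: "{x \<in> space P. graphF (expF \<theta>) \<subseteq> B4' m R d x} = ?E1" using B4'_iff[OF th] by auto
  have r4: "{x \<in> space P. graphF (expF \<theta>) \<subseteq> B4'' m R d x} = ?E2" using B4''_iff[OF th] by auto
  show ?thesis using r1 r2 r3 r4 by simp
qed


end
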